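(* Let $A=\{a_{ij}\}$ be a real $N\times N$ matrix satisfying condition (M), and let $D=\mathrm{diag}(d_{11},\dots,d_{NN})$ with $d_{ii}>0$ for all $i$ and $\sum_{i=1}^N d_{ii}a_{ij}\ge0$ for every $j$. Then for every $\sigma\in[0,1]$ and every $\Delta t>0$ the matrix $E+\Delta t\,\sigma A$ is invertible and $$\frac{\|D\|_1}{\max_j s_j}\le \left\|\left[E+\Delta t\,\sigma A\right]^{-1}\right\|_1\le \frac{\|D\|_1}{\min_j s_j},\qquad s_j:=d_{jj}+\Delta t\,\sigma\sum_{i=1}^N d_{ii}a_{ij}.$$
   Context: $E$ is the $N\times N$ identity. Condition (M) on a real $N\times N$ matrix $A=\{a_{ij}\}$: $a_{ii}\ge 0$ for all $i$ and $a_{ij}\le 0$ for all $i\ne j$. For vectors $\|y\|_1=\sum_i|y_i|$ and for matrices $\|A\|_1=\max_j\sum_i|a_{ij}|$ (so $\|D\|_1=\max_i d_{ii}$). *)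

theory Defs
  imports "HOL-Analysis.Analysis"
begin

text \<open>Matrices are \<open>real^'n^'n\<close>; entry \<open>A $ i $ j\<close> is row i, column j.\<close>

definition cond_M :: "real^'n^'n \<Rightarrow> bool" where
  "cond_M A \<longleftrightarrow> (\<forall>i. A $ i $ i \<ge> 0) \<and> (\<forall>i j. i \<noteq> j \<longrightarrow> A $ i $ j \<le> 0)"

definition mat_norm1 :: "real^'n^'n \<Rightarrow> real" where
  "mat_norm1 A = Max (range (\<lambda>j. \<Sum>i\<in>UNIV. \<bar>A $ i $ j\<bar>))"

definition diag_mat :: "real^'n \<Rightarrow> real^'n^'n" where
  "diag_mat d = (\<chi> i j. if i = j then d $ i else 0)"

end

theory Submission
  imports Defs
begin

theorem theorem2:
  fixes A :: "real^'n^'n" and d :: "real^'n" and \<sigma> \<Delta>t :: real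
  assumes "cond_M A"
    and "\<forall>i. d $ i > 0"
    and "\<forall>j. (\<Sum>i\<in>UNIV. d $ i * A $ i $ j) \<ge> 0"
    and "0 \<le> \<sigma>" and "\<sigma> \<le> 1" and "\<Delta>t > 0"
  defines "s \<equiv> (\<lambda>j. d $ j + \<Delta>t * \<sigma> * (\<Sum>i\<in>UNIV. d $ i * A $ i $ j))"
  shows "invertible (mat 1 + (\<Delta>t * \<sigma>) *\<^sub>R A)
    \<and> mat_norm1 (diag_mat d) / Max (range s) \<le> mat_norm1 (matrix_inv (mat 1 + (\<Delta>t * \<sigma>) *\<^sub>R A))
    \<and> mat_norm1 (matrix_inv (mat 1 + (\<Delta>t * \<sigma>) *\<^sub>R A)) \<le> mat_norm1 (diag_mat d) / Min (range s)"
proof -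
  define c where "c = \<Delta>t * \<sigma>"
  have c0: "c \<ge> 0" using assms(4,6) unfolding c_def by simp
  define B where "B = mat 1 + c *\<^sub>R A"
  have Bent: "B $ k $ i = (if k = i then 1 else 0) + c * A $ k $ i" for k i
    unfolding B_def by (simp add: mat_def)
  have Boff: "B $ k $ i \<le> 0" if "k \<noteq> i" for k i
    using Bent[of k i] that assms(1) c0 unfolding cond_M_def
    by (simp add: mult_nonneg_nonpos)
  have sB: "s i = (\<Sum>k\<in>UNIV. d $ k * B $ k $ i)" for i
  proof -
    have "(\<Sum>k\<in>UNIV. d $ k * B $ k $ i)
        = (\<Sum>k\<in>UNIV. d $ k * (if k = i then 1 else 0)) + c * (\<Sum>k\<in>UNIV. d $ k * A $ k $ i)"
      by (simp add: Bent distrib_left sum.distrib sum_distrib_left mult.left_commute)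
    also have "\<dots> = s i" by (simp add: s_def c_def if_distrib cong: if_cong)
    finally show ?thesis by simp
  qed
  have spos: "s i \<ge> d $ i" for i
    using assms(3) c0 unfolding s_def c_def[symmetric] by simp
  have spos': "s i > 0" for i using spos[of i] assms(2) by (meson less_le_trans)
  have key: "\<forall>i. 0 \<le> y $ i" if y: "\<forall>j. 0 \<le> (y v* B) $ j" for y
  proof (rule ccontr)
    assume "\<not> (\<forall>i. 0 \<le> y $ i)"
    then obtain i0 where i0: "y $ i0 < 0" by (auto simp: not_le)
    define w where "w = Min (range (\<lambda>k. y $ k / d $ k))"
    have "w \<in> range (\<lambda>k. y $ k / d $ k)"
      unfolding w_def by (rule Min_in) auto
    then obtain i where i: "w = y $ i / d $ i" by auto
    have wle: "w \<le> y $ k / d $ k" for k unfolding w_def by simp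
    have wneg: "w < 0"
      using wle[of i0] i0 assms(2) by (smt (verit) divide_neg_pos)
    have yk: "w * d $ k \<le> y $ k" for k
      using wle[of k] assms(2) by (simp add: le_divide_eq)
    have yi: "y $ i = w * d $ i" using i assms(2) by (simp add: less_imp_neq[symmetric])
    have "(y v* B) $ i = (\<Sum>k\<in>UNIV. y $ k * B $ k $ i)"
      by (simp add: vector_matrix_mult_def)
    also have "\<dots> \<le> (\<Sum>k\<in>UNIV. w * d $ k * B $ k $ i)"
    proof (rule sum_mono)
      fix k
      show "y $ k * B $ k $ i \<le> w * d $ k * B $ k $ i"
      proof (cases "k = i")
        case True then show ?thesis using yi by simp
      next
        case False then show ?thesis using Boff[OF False] yk[of k]
          by (simp add: mult_right_mono_neg)
      qed
    qed
    also have "\<dots> = w * s i" by (simp add: sB sum_distrib_left mult.assoc)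
    also have "\<dots> < 0" using wneg spos'[of i] by (simp add: mult_neg_pos)
    finally show False using y by (meson not_le)
  qed
  have ker: "\<forall>x. transpose B *v x = 0 \<longrightarrow> x = 0"
  proof (intro allI impI)
    fix x assume "transpose B *v x = 0"
    then have x0: "x v* B = 0" by simp
    have "\<forall>i. 0 \<le> x $ i" by (rule key) (simp add: x0)
    moreover have "\<forall>i. 0 \<le> (- x) $ i"
    proof (rule key)
      have "(- x) v* B = - (x v* B)" by (simp add: vec_eq_iff vector_matrix_mult_def sum_negf)
      then show "\<forall>j. 0 \<le> ((- x) v* B) $ j" by (simp add: x0)
    qed
    ultimately show "x = 0" by (simp add: vec_eq_iff order_antisym)
  qed
  have invB: "invertible B"
    using ker unfolding matrix_left_invertible_ker[symmetric] left_invertible_transpose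
      invertible_right_inverse by blast
  define X where "X = matrix_inv B"
  have XB: "B ** X = mat 1 \<and> X ** B = mat 1"
    using invB unfolding X_def matrix_inv_def invertible_def by (rule someI_ex)
  have Xnn: "X $ i $ k \<ge> 0" for i k
  proof -
    have "\<forall>j. 0 \<le> (X $ i v* B) $ j"
    proof
      fix j
      have "(X $ i v* B) $ j = (X ** B) $ i $ j"
        by (simp add: vector_matrix_mult_def matrix_matrix_mult_def mult.commute)
      then show "0 \<le> (X $ i v* B) $ j" using XB by (simp add: mat_def)
    qed
    from key[OF this] show ?thesis by simp
  qed
  define sv where "sv = (\<chi> j. s j)"
  have dB: "d v* B = sv"
    by (simp add: sv_def vec_eq_iff vector_matrix_mult_def sB mult.commute)
  have dX: "sv v* X = d"
    using dB XB by (metis vector_matrix_mul_assoc vector_matrix_mul_rid)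
  define cs where "cs = (\<lambda>k. \<Sum>i\<in>UNIV. X $ i $ k)"
  have nX: "mat_norm1 X = Max (range cs)"
    unfolding mat_norm1_def cs_def using Xnn by simp
  have dk: "d $ k = (\<Sum>j\<in>UNIV. s j * X $ j $ k)" for k
    using dX unfolding sv_def by (simp add: vec_eq_iff vector_matrix_mult_def)
  define Ms where "Ms = Max (range s)"
  define ms where "ms = Min (range s)"
  have Ms: "s j \<le> Ms" for j unfolding Ms_def by simp
  have ms: "ms \<le> s j" for j unfolding ms_def by simp
  have mspos: "ms > 0" unfolding ms_def
    using Min_in[of "range s"] spos' by auto
  have Mspos: "Ms > 0" using Ms[of undefined] spos'[of undefined] by linarith
  have up: "d $ k \<le> Ms * cs k" for k
    unfolding dk cs_def sum_distrib_left
    by (rule sum_mono) (simp add: Ms Xnn mult_right_mono)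
  have lo: "ms * cs k \<le> d $ k" for k
    unfolding dk cs_def sum_distrib_left
    by (rule sum_mono) (simp add: ms Xnn mult_right_mono)
  have nD: "mat_norm1 (diag_mat d) = Max (range (\<lambda>j. d $ j))"
  proof -
    have "(\<Sum>i\<in>UNIV. \<bar>diag_mat d $ i $ j\<bar>) = d $ j" for j
    proof -
      have "(\<Sum>i\<in>UNIV. \<bar>diag_mat d $ i $ j\<bar>) = (\<Sum>i\<in>UNIV. if i = j then \<bar>d $ j\<bar> else 0)"
        by (rule sum.cong) (auto simp: diag_mat_def)
      also have "\<dots> = d $ j" using assms(2) by (simp add: less_imp_le)
      finally show ?thesis .
    qed
    then show ?thesis unfolding mat_norm1_def by simp
  qed
  define Dm where "Dm = Max (range (\<lambda>j. d $ j))"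
  have "Dm \<in> range (\<lambda>j. d $ j)" unfolding Dm_def by (rule Max_in) auto
  then obtain k0 where k0: "Dm = d $ k0" by auto
  have dle: "d $ k \<le> Dm" for k unfolding Dm_def by simp
  have L: "Dm / Ms \<le> Max (range cs)"
  proof -
    have "Dm / Ms \<le> cs k0" using up[of k0] k0 Mspos by (simp add: divide_le_eq mult.commute)
    also have "\<dots> \<le> Max (range cs)" by simp
    finally show ?thesis .
  qed
  have U: "Max (range cs) \<le> Dm / ms"
  proof -
    have "cs k \<le> Dm / ms" for k
      using lo[of k] dle[of k] mspos by (simp add: le_divide_eq mult.commute)
    then show ?thesis by simp
  qed
  show ?thesis
    using invB L U nX nD
    unfolding B_def c_def X_def Dm_def Ms_def ms_def by simp
qed

end
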